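(* Let $n\ge 2$, and let $S$ be a semitransitive subsemigroup of $\mathcal{I}_n\setminus\mathcal{S}_n$ with $|S|\le 2n$. Let $e\in S$ be a non-zero idempotent and $\varphi\in eSe$. Then $\varphi$ either belongs to the group of units of the monoid $eSe$ (whose identity is $e$), or $\varphi$ is nilpotent (i.e. $\varphi^k=0$ for some $k\ge1$).
   Context: $\mathcal{I}_n$ denotes the symmetric inverse semigroup of all partial injective maps of $X=\{1,\dots,n\}$ to itself, with maps written on the right and composed left to right; $0$ denotes the empty map. $\mathcal{S}_n$ is the symmetric group on $X$. A semigroup $S$ of partial transformations of $X$ is semitransitive if for all $x,y\in X$ there is $\varphi\in S$ with $x\varphi=y$ or $y\varphi=x$. $eSe=\{e\sigma e:\sigma\in S\}$. *)

theory Defs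
  imports Main
begin

text \<open>Partial maps of X = {1..n} are modelled as maps nat \<rightharpoonup> nat.
  Maps act on the right and compose left to right: x(\<phi>\<psi>) = (x\<phi>)\<psi>.\<close>

definition pinj :: "nat \<Rightarrow> (nat \<rightharpoonup> nat) \<Rightarrow> bool" where
  "pinj n f \<longleftrightarrow> dom f \<subseteq> {1..n} \<and> ran f \<subseteq> {1..n} \<and> inj_on f (dom f)"

definition sym_inv :: "nat \<Rightarrow> (nat \<rightharpoonup> nat) set" where
  "sym_inv n = {f. pinj n f}"

definition sym_grp :: "nat \<Rightarrow> (nat \<rightharpoonup> nat) set" where
  "sym_grp n = {f. pinj n f \<and> dom f = {1..n} \<and> ran f = {1..n}}"

definition pcomp :: "(nat \<rightharpoonup> nat) \<Rightarrow> (nat \<rightharpoonup> nat) \<Rightarrow> (nat \<rightharpoonup> nat)" (infixl "\<cdot>" 70) where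
  "f \<cdot> g = g \<circ>\<^sub>m f"

fun ppow :: "(nat \<rightharpoonup> nat) \<Rightarrow> nat \<Rightarrow> (nat \<rightharpoonup> nat)" where
  "ppow f 0 = Some"
| "ppow f (Suc k) = ppow f k \<cdot> f"

definition subsemigroup :: "(nat \<rightharpoonup> nat) set \<Rightarrow> bool" where
  "subsemigroup S \<longleftrightarrow> (\<forall>f\<in>S. \<forall>g\<in>S. f \<cdot> g \<in> S)"

definition semitransitive :: "nat \<Rightarrow> (nat \<rightharpoonup> nat) set \<Rightarrow> bool" where
  "semitransitive n S \<longleftrightarrow>
     (\<forall>x\<in>{1..n}. \<forall>y\<in>{1..n}. \<exists>f\<in>S. f x = Some y \<or> f y = Some x)"

definition corner :: "(nat \<rightharpoonup> nat) \<Rightarrow> (nat \<rightharpoonup> nat) set \<Rightarrow> (nat \<rightharpoonup> nat) set" where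
  "corner e S = {e \<cdot> s \<cdot> e | s. s \<in> S}"

definition units_of_monoid :: "(nat \<rightharpoonup> nat) set \<Rightarrow> (nat \<rightharpoonup> nat) \<Rightarrow> (nat \<rightharpoonup> nat) set" where
  "units_of_monoid M e = {f \<in> M. \<exists>g\<in>M. f \<cdot> g = e \<and> g \<cdot> f = e}"

definition nilpotent_map :: "(nat \<rightharpoonup> nat) \<Rightarrow> bool" where
  "nilpotent_map f \<longleftrightarrow> (\<exists>k\<ge>1. ppow f k = Map.empty)"

end

theory Submission
  imports Defs
begin

lemma pc_apply: "(f \<cdot> g) x = (case f x of None \<Rightarrow> None | Some y \<Rightarrow> g y)"
  by (simp add: pcomp_def map_comp_def)

lemma pc_Some: "(f \<cdot> g) x = Some z \<longleftrightarrow> (\<exists>y. f x = Some y \<and> g y = Some z)"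
  by (simp add: pcomp_def map_comp_Some_iff)

lemma pc_assoc[simp]: "(f \<cdot> g) \<cdot> h = f \<cdot> (g \<cdot> h)"
  by (rule ext) (simp add: pc_apply split: option.split)

lemma pc_Some_left[simp]: "Some \<cdot> g = g"
  by (rule ext) (simp add: pc_apply)

lemma pc_Some_right[simp]: "g \<cdot> Some = g"
  by (rule ext) (simp add: pc_apply split: option.split)

lemma ppow_add: "ppow f (a + b) = ppow f a \<cdot> ppow f b"
  by (induction b) auto

lemma dom_pc: "dom (f \<cdot> g) \<subseteq> dom f"
  by (auto simp: pc_apply split: option.splits)

lemma ran_pc: "ran (f \<cdot> g) \<subseteq> ran g"
  by (auto simp: ran_def pc_Some)

lemma card_ran_dom:
  assumes "inj_on m (dom m)" shows "card (ran m) = card (dom m)"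
proof -
  have "ran m = (\<lambda>x. the (m x)) ` dom m" by (force simp: ran_def dom_def image_def)
  moreover have "inj_on (\<lambda>x. the (m x)) (dom m)"
    using assms unfolding inj_on_def by (metis domIff option.expand)
  ultimately show ?thesis by (simp add: card_image)
qed

lemma fin_sym_inv: "finite (sym_inv n)"
proof -
  have "sym_inv n \<subseteq> (\<Union>A\<in>Pow {1..n}. {m. dom m = A \<and> ran m \<subseteq> {1..n}})"
    by (auto simp: sym_inv_def pinj_def)
  moreover have "finite (\<Union>A\<in>Pow {1..n}. {m. dom m = A \<and> ran m \<subseteq> {1..n}})"
    by (intro finite_UN_I) (auto intro: finite_set_of_finite_maps finite_subset)
  ultimately show ?thesis by (rule finite_subset)
qed

locale SIS =
  fixes n :: nat and S :: "(nat \<rightharpoonup> nat) set"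
  assumes sub: "S \<subseteq> sym_inv n - sym_grp n" and semi: "subsemigroup S"
    and st: "semitransitive n S"
begin

lemma closed: "s \<in> S \<Longrightarrow> t \<in> S \<Longrightarrow> s \<cdot> t \<in> S"
  using semi by (auto simp: subsemigroup_def)

lemma pinjS: "s \<in> S \<Longrightarrow> pinj n s"
  using sub by (auto simp: sym_inv_def)

lemma domX: "s \<in> S \<Longrightarrow> dom s \<subseteq> {1..n}"
  using pinjS by (auto simp: pinj_def)

lemma ranX: "s \<in> S \<Longrightarrow> ran s \<subseteq> {1..n}"
  using pinjS by (auto simp: pinj_def)

lemma injS: "s \<in> S \<Longrightarrow> s a = Some c \<Longrightarrow> s b = Some c \<Longrightarrow> a = b"
  using pinjS[of s] unfolding pinj_def inj_on_def by (metis domI)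

lemma injdom: "s \<in> S \<Longrightarrow> inj_on s (dom s)"
  using pinjS[of s] unfolding pinj_def by blast

lemma finS: "finite S"
  using sub fin_sym_inv finite_subset by blast

lemma notgrp: "s \<in> S \<Longrightarrow> dom s = {1..n} \<Longrightarrow> ran s = {1..n} \<Longrightarrow> False"
  using sub pinjS by (auto simp: sym_grp_def)

lemma stI: "x \<in> {1..n} \<Longrightarrow> y \<in> {1..n} \<Longrightarrow> \<exists>s\<in>S. s x = Some y \<or> s y = Some x"
  using st unfolding semitransitive_def by blast

lemma idem_fix:
  assumes "s \<in> S" "s \<cdot> s = s" "s x = Some y" shows "y = x"
proof -
  have "(s \<cdot> s) x = Some y" using assms by simp
  then obtain z where "s x = Some z" "s z = Some y" by (auto simp: pc_Some)
  then have "s y = Some y" using assms(3) by simp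
  thus "y = x" using injS[OF assms(1) _ assms(3)] by blast
qed

lemma idem_iff:
  assumes "s \<in> S" "s \<cdot> s = s" shows "s x = Some y \<longleftrightarrow> (x \<in> dom s \<and> y = x)"
  using idem_fix[OF assms] by auto

lemma trans_rel: "s \<in> S \<Longrightarrow> t \<in> S \<Longrightarrow> s a = Some b \<Longrightarrow> t b = Some c \<Longrightarrow> \<exists>u\<in>S. u a = Some c"
  by (intro bexI[of _ "s \<cdot> t"]) (auto simp: pc_Some closed)

lemma minex:
  assumes "finite L" "L \<noteq> {}" "L \<subseteq> {1..n}"
  shows "\<exists>m\<in>L. \<forall>y\<in>L. \<exists>s\<in>S. s m = Some y"
  using assms
proof (induction L rule: finite_ne_induct)
  case (singleton x)
  then show ?case using stI[of x x] by auto
next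
  case (insert x F)
  then obtain m where m: "m \<in> F" "\<forall>y\<in>F. \<exists>s\<in>S. s m = Some y" by auto
  have xx: "\<exists>s\<in>S. s x = Some x" using stI[of x x] insert by auto
  have "m \<in> {1..n}" "x \<in> {1..n}" using insert m by auto
  then obtain s where s: "s \<in> S" "s x = Some m \<or> s m = Some x" using stI by blast
  show ?case
  proof (cases "s x = Some m")
    case True
    have "\<forall>y\<in>insert x F. \<exists>u\<in>S. u x = Some y"
      using xx m(2) trans_rel[OF s(1) _ True] by blast
    then show ?thesis by blast
  next
    case False
    then have "s m = Some x" using s by auto
    then show ?thesis using m s(1) by blast
  qed
qed

lemma zero_in:
  assumes e: "e \<in> S" "e \<cdot> e = e" "dom e \<noteq> {1..n}"
  shows "Map.empty \<in> S"
proof (rule ccontr)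
  assume nz: "Map.empty \<notin> S"
  obtain \<mu> where mu: "\<mu> \<in> S" "\<forall>s. s \<in> S \<longrightarrow> card (dom \<mu>) \<le> card (dom s)"
    using ex_has_least_nat[of "\<lambda>s. s \<in> S" e "\<lambda>s. card (dom s)"] e by blast
  have finD: "finite (dom s)" if "s \<in> S" for s using domX[OF that] finite_subset by blast
  have finR: "finite (ran s)" if "s \<in> S" for s using ranX[OF that] finite_subset by blast
  have i: "y \<in> dom s" if "s \<in> S" "\<mu> x = Some y" for s x y
  proof -
    have ms: "\<mu> \<cdot> s \<in> S" using closed that mu by blast
    have "dom (\<mu> \<cdot> s) = dom \<mu>"
    proof (rule card_subset_eq[OF finD[OF mu(1)] dom_pc])
      show "card (dom (\<mu> \<cdot> s)) = card (dom \<mu>)"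
        using mu(2) ms card_mono[OF finD[OF mu(1)] dom_pc[of \<mu> s]] by force
    qed
    then have "x \<in> dom (\<mu> \<cdot> s)" using that by blast
    then show ?thesis using that by (auto simp: pc_apply)
  qed
  have ii: "\<exists>w. s w = Some z" if "s \<in> S" "z \<in> dom \<mu>" for s z
  proof -
    have sm: "s \<cdot> \<mu> \<in> S" using closed that mu by blast
    have "card (ran \<mu>) \<le> card (ran (s \<cdot> \<mu>))"
      using card_ran_dom[OF injdom[OF sm]] card_ran_dom[OF injdom[OF mu(1)]] mu(2) sm by simp
    have req: "ran (s \<cdot> \<mu>) = ran \<mu>"
    proof (rule card_subset_eq[OF finR[OF mu(1)] ran_pc])
      show "card (ran (s \<cdot> \<mu>)) = card (ran \<mu>)"
        using \<open>card (ran \<mu>) \<le> card (ran (s \<cdot> \<mu>))\<close> card_mono[OF finR[OF mu(1)] ran_pc[of s \<mu>]] by force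
    qed
    obtain v where v: "\<mu> z = Some v" using \<open>z \<in> dom \<mu>\<close> by blast
    then have "v \<in> ran (s \<cdot> \<mu>)" using req by (auto simp: ran_def)
    then obtain w u where "s w = Some u" "\<mu> u = Some v" by (auto simp: ran_def pc_Some)
    then have "u = z" using injS[OF mu(1) _ v] by blast
    then show ?thesis using \<open>s w = Some u\<close> by blast
  qed
  have "\<mu> \<noteq> Map.empty" using nz mu by auto
  then obtain x' x where xx: "\<mu> x' = Some x" by (metis not_None_eq)
  have xdom: "x \<in> dom \<mu>" using i[OF mu(1) xx] .
  have xX: "x \<in> {1..n}" using ranX[OF mu(1)] xx by (auto simp: ran_def)
  obtain y where y: "y \<in> {1..n}" "y \<notin> dom e" using e(3) domX[OF e(1)] by blast
  obtain s where s: "s \<in> S" "s x = Some y \<or> s y = Some x" using stI[OF xX y(1)] by blast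
  show False
  proof (cases "s x = Some y")
    case True
    have "e y \<noteq> None" using i[OF closed[OF s(1) e(1)] xx] True by (auto simp: pc_apply)
    then show False using y by auto
  next
    case False
    then have sy: "s y = Some x" using s by auto
    obtain w where "(e \<cdot> s) w = Some x" using ii[OF closed[OF e(1) s(1)] xdom] by blast
    then obtain u where u: "e w = Some u" "s u = Some x" by (auto simp: pc_Some)
    have "u = w" using idem_fix[OF e(1) e(2) u(1)] .
    moreover have "u = y" using injS[OF s(1) u(2) sy] .
    ultimately show False using u(1) y by auto
  qed
qed

lemma count:
  assumes e: "e \<in> S" "e \<cdot> e = e"
    and f: "f \<in> S" "f \<cdot> f = f" "f \<noteq> Map.empty" "f \<noteq> e" "dom f \<subseteq> dom e"
  shows "2 * n + 1 \<le> card S"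
proof -
  define X where "X = {1..n::nat}"
  define D where "D = dom e"
  define F where "F = dom f"
  have eS: "e x = Some y \<longleftrightarrow> (x \<in> D \<and> y = x)" for x y using idem_iff[OF e] D_def by simp
  have fS: "f x = Some y \<longleftrightarrow> (x \<in> F \<and> y = x)" for x y using idem_iff[OF f(1,2)] F_def by simp
  have FD: "F \<subseteq> D" using f(5) F_def D_def by simp
  have DX: "D \<subseteq> X" using domX[OF e(1)] D_def X_def by simp
  have finX: "finite X" using X_def by simp
  have finD: "finite D" using DX finX finite_subset by blast
  have finF: "finite F" using FD finD finite_subset by blast
  have FneD: "F \<noteq> D"
  proof
    assume "F = D"
    have "f x = e x" for x
    proof (cases "x \<in> D")
      case True
      then show ?thesis using fS[of x x] eS[of x x] \<open>F = D\<close> by simp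
    next
      case False
      then have "x \<notin> dom f" "x \<notin> dom e" using \<open>F = D\<close> F_def D_def by auto
      then show ?thesis by (simp add: domIff)
    qed
    then show False using f(4) by auto
  qed
  have Fne: "F \<noteq> {}" using f(3) F_def by simp
  have DneX: "D \<noteq> X"
  proof
    assume "D = X"
    have "ran e = D" using eS by (auto simp: ran_def)
    then show False using notgrp[OF e(1)] \<open>D = X\<close> D_def X_def by simp
  qed
  obtain p0 where p0: "p0 \<in> F" "\<forall>y\<in>F. \<exists>s\<in>S. s p0 = Some y"
    using minex[OF finF Fne] FD DX X_def by auto
  obtain b0 where b0: "b0 \<in> D - F" "\<forall>y\<in>D - F. \<exists>s\<in>S. s b0 = Some y"
  proof -
    have "D - F \<noteq> {}" using FneD FD by blast
    moreover have "D - F \<subseteq> {1..n}" using X_def DX by auto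
    ultimately show ?thesis using minex[of "D - F"] finD that by blast
  qed
  obtain a0 where a0: "a0 \<in> X - D" "\<forall>y\<in>X - D. \<exists>s\<in>S. s a0 = Some y"
  proof -
    have "X - D \<noteq> {}" using DneX DX by blast
    moreover have "X - D \<subseteq> {1..n}" using X_def by auto
    ultimately show ?thesis using minex[of "X - D"] finX that by blast
  qed
  have zero: "Map.empty \<in> S" using zero_in[OF e] DneX D_def X_def by simp
  define pre where "pre \<phi> c = (SOME x. \<phi> x = Some c)" for \<phi> :: "nat \<rightharpoonup> nat" and c
  have pre: "pre \<phi> c = x" if "\<phi> \<in> S" "\<phi> x = Some c" for \<phi> x c
  proof -
    have "\<phi> (pre \<phi> c) = Some c" unfolding pre_def using that(2) by (rule someI)
    then show ?thesis using injS[OF that(1) _ that(2)] by blast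
  qed
  have stX: "\<exists>s\<in>S. s x = Some y \<or> s y = Some x" if "x \<in> X" "y \<in> X" for x y
    using stI that X_def by blast
  define W1 where "W1 = {\<phi>\<in>S. (\<forall>x y. \<phi> x = Some y \<longrightarrow> x \<in> F \<and> y \<in> F) \<and> (\<exists>y. \<phi> p0 = Some y)}"
  define W2 where "W2 = {\<phi>\<in>S. (\<forall>x y. \<phi> x = Some y \<longrightarrow> x \<in> D \<and> y \<in> D) \<and> (\<exists>y. \<phi> b0 = Some y \<and> y \<notin> F)}"
  define W3 where "W3 = {\<phi>\<in>S. \<exists>y. \<phi> a0 = Some y \<and> y \<notin> D}"
  define A1 where "A1 = {\<phi>\<in>S. (\<exists>y. \<phi> a0 = Some y) \<and> (\<forall>x y. \<phi> x = Some y \<longrightarrow> y \<in> F)}"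
  define A2 where "A2 = {\<phi>\<in>S. (\<forall>x y. \<phi> x = Some y \<longrightarrow> x \<in> F) \<and> (\<exists>x. \<phi> x = Some a0)}"
  define B1 where "B1 = {\<phi>\<in>S. (\<forall>x y. \<phi> x = Some y \<longrightarrow> y \<in> D) \<and> (\<exists>x. x \<notin> D \<and> \<phi> x = Some b0)}"
  define B2 where "B2 = {\<phi>\<in>S. (\<forall>x y. \<phi> x = Some y \<longrightarrow> x \<in> D) \<and> (\<exists>y. \<phi> b0 = Some y \<and> y \<notin> D)}"
  define C1 where "C1 = {\<phi>\<in>S. (\<forall>x y. \<phi> x = Some y \<longrightarrow> x \<in> D \<and> y \<in> F) \<and> (\<exists>x. x \<notin> F \<and> \<phi> x = Some p0)}"
  define C2 where "C2 = {\<phi>\<in>S. (\<forall>x y. \<phi> x = Some y \<longrightarrow> x \<in> F \<and> y \<in> D) \<and> (\<exists>y. \<phi> p0 = Some y \<and> y \<notin> F)}"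
  define Z where "Z = {Map.empty :: nat \<rightharpoonup> nat}"
  note defs = W1_def W2_def W3_def A1_def A2_def B1_def B2_def C1_def C2_def Z_def
  have b0F: "b0 \<in> D" "b0 \<notin> F" using b0 by auto
  have a0D: "a0 \<notin> D" using a0 by auto
  have p0D: "p0 \<in> D" using p0 FD by auto
  have fe: "f p0 = Some p0" "e p0 = Some p0" "e b0 = Some b0" using fS eS p0 p0D b0F by auto
  have c1: "F \<subseteq> (\<lambda>\<phi>. the (\<phi> p0)) ` W1"
  proof
    fix y assume y: "y \<in> F"
    then obtain s where s: "s \<in> S" "s p0 = Some y" using p0 by blast
    have "f \<cdot> (s \<cdot> f) \<in> W1" unfolding W1_def
      using s y fe closed[OF f(1) closed[OF s(1) f(1)]] by (auto simp: pc_Some fS)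
    moreover have "(f \<cdot> (s \<cdot> f)) p0 = Some y" using s y fe by (auto simp: pc_Some fS)
    ultimately show "y \<in> (\<lambda>\<phi>. the (\<phi> p0)) ` W1" by (intro rev_image_eqI[of _ W1]) auto
  qed
  have c2: "D - F \<subseteq> (\<lambda>\<phi>. the (\<phi> b0)) ` W2"
  proof
    fix y assume y: "y \<in> D - F"
    then obtain s where s: "s \<in> S" "s b0 = Some y" using b0 by blast
    have "e \<cdot> (s \<cdot> e) \<in> W2" unfolding W2_def
      using s y fe closed[OF e(1) closed[OF s(1) e(1)]] by (auto simp: pc_Some eS)
    moreover have "(e \<cdot> (s \<cdot> e)) b0 = Some y" using s y fe by (auto simp: pc_Some eS)
    ultimately show "y \<in> (\<lambda>\<phi>. the (\<phi> b0)) ` W2" by (intro rev_image_eqI[of _ W2]) auto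
  qed
  have c3: "X - D \<subseteq> (\<lambda>\<phi>. the (\<phi> a0)) ` W3"
  proof
    fix y assume y: "y \<in> X - D"
    then obtain s where s: "s \<in> S" "s a0 = Some y" using a0 by blast
    have "s \<in> W3" unfolding W3_def using s y by auto
    then show "y \<in> (\<lambda>\<phi>. the (\<phi> a0)) ` W3" using s by (intro rev_image_eqI[of _ W3]) auto
  qed
  have c4: "F \<subseteq> (\<lambda>\<phi>. the (\<phi> a0)) ` A1 \<union> (\<lambda>\<phi>. pre \<phi> a0) ` A2"
  proof
    fix y assume y: "y \<in> F"
    then have "y \<in> X" "a0 \<in> X" using FD DX a0 by auto
    then obtain s where s: "s \<in> S" "s a0 = Some y \<or> s y = Some a0" using stX by blast
    show "y \<in> (\<lambda>\<phi>. the (\<phi> a0)) ` A1 \<union> (\<lambda>\<phi>. pre \<phi> a0) ` A2"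
    proof (cases "s a0 = Some y")
      case True
      have m: "s \<cdot> f \<in> S" using closed s f by blast
      have "s \<cdot> f \<in> A1" unfolding A1_def using m True y by (auto simp: pc_Some fS)
      moreover have "(s \<cdot> f) a0 = Some y" using True y by (auto simp: pc_Some fS)
      ultimately show ?thesis by (intro UnI1 rev_image_eqI) auto
    next
      case False
      then have sy: "s y = Some a0" using s by auto
      have m: "f \<cdot> s \<in> S" using closed s f by blast
      have "f \<cdot> s \<in> A2" unfolding A2_def using m sy y by (auto simp: pc_Some fS)
      moreover have "(f \<cdot> s) y = Some a0" using sy y by (auto simp: pc_Some fS)
      ultimately show ?thesis using pre[OF m] by (intro UnI2 rev_image_eqI) auto
    qed
  qed
  have c5: "X - D \<subseteq> (\<lambda>\<phi>. pre \<phi> b0) ` B1 \<union> (\<lambda>\<phi>. the (\<phi> b0)) ` B2"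
  proof
    fix y assume y: "y \<in> X - D"
    then have "y \<in> X" "b0 \<in> X" using DX b0F by auto
    then obtain s where s: "s \<in> S" "s y = Some b0 \<or> s b0 = Some y" using stX by blast
    show "y \<in> (\<lambda>\<phi>. pre \<phi> b0) ` B1 \<union> (\<lambda>\<phi>. the (\<phi> b0)) ` B2"
    proof (cases "s y = Some b0")
      case True
      have m: "s \<cdot> e \<in> S" using closed s e by blast
      have "s \<cdot> e \<in> B1" unfolding B1_def using m True y b0F by (auto simp: pc_Some eS)
      moreover have "(s \<cdot> e) y = Some b0" using True b0F by (auto simp: pc_Some eS)
      ultimately show ?thesis using pre[OF m] by (intro UnI1 rev_image_eqI) auto
    next
      case False
      then have sy: "s b0 = Some y" using s by auto
      have m: "e \<cdot> s \<in> S" using closed s e by blast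
      have "e \<cdot> s \<in> B2" unfolding B2_def using m sy y b0F by (auto simp: pc_Some eS)
      moreover have "(e \<cdot> s) b0 = Some y" using sy b0F by (auto simp: pc_Some eS)
      ultimately show ?thesis by (intro UnI2 rev_image_eqI) auto
    qed
  qed
  have c6: "D - F \<subseteq> (\<lambda>\<phi>. pre \<phi> p0) ` C1 \<union> (\<lambda>\<phi>. the (\<phi> p0)) ` C2"
  proof
    fix y assume y: "y \<in> D - F"
    then have "y \<in> X" "p0 \<in> X" using DX p0D by auto
    then obtain s where s: "s \<in> S" "s y = Some p0 \<or> s p0 = Some y" using stX by blast
    show "y \<in> (\<lambda>\<phi>. pre \<phi> p0) ` C1 \<union> (\<lambda>\<phi>. the (\<phi> p0)) ` C2"
    proof (cases "s y = Some p0")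
      case True
      have m: "e \<cdot> (s \<cdot> f) \<in> S" using closed s e f by blast
      have "e \<cdot> (s \<cdot> f) \<in> C1" unfolding C1_def using m True y p0 by (auto simp: pc_Some eS fS)
      moreover have "(e \<cdot> (s \<cdot> f)) y = Some p0" using True y p0 by (auto simp: pc_Some eS fS)
      ultimately show ?thesis using pre[OF m] by (intro UnI1 rev_image_eqI) auto
    next
      case False
      then have sy: "s p0 = Some y" using s by auto
      have m: "f \<cdot> (s \<cdot> e) \<in> S" using closed s e f by blast
      have "f \<cdot> (s \<cdot> e) \<in> C2" unfolding C2_def using m sy y p0 by (auto simp: pc_Some eS fS)
      moreover have "(f \<cdot> (s \<cdot> e)) p0 = Some y" using sy y p0 by (auto simp: pc_Some eS fS)
      ultimately show ?thesis by (intro UnI2 rev_image_eqI) auto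
    qed
  qed
  have sub: "W1 \<subseteq> S" "W2 \<subseteq> S" "W3 \<subseteq> S" "A1 \<subseteq> S" "A2 \<subseteq> S" "B1 \<subseteq> S" "B2 \<subseteq> S"
    "C1 \<subseteq> S" "C2 \<subseteq> S" "Z \<subseteq> S" using zero by (auto simp: defs)
  have fin: "finite W1" "finite W2" "finite W3" "finite A1" "finite A2" "finite B1" "finite B2"
    "finite C1" "finite C2" "finite Z" using sub finS finite_subset by blast+
  have k1: "card F \<le> card W1"
    using order_trans[OF card_mono[OF finite_imageI[OF fin(1)] c1] card_image_le[OF fin(1)]] .
  have k2: "card (D - F) \<le> card W2"
    using order_trans[OF card_mono[OF finite_imageI[OF fin(2)] c2] card_image_le[OF fin(2)]] .
  have k3: "card (X - D) \<le> card W3"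
    using order_trans[OF card_mono[OF finite_imageI[OF fin(3)] c3] card_image_le[OF fin(3)]] .
  have k4: "card F \<le> card A1 + card A2"
  proof -
    have "card F \<le> card ((\<lambda>\<phi>. the (\<phi> a0)) ` A1 \<union> (\<lambda>\<phi>. pre \<phi> a0) ` A2)"
      using card_mono[OF _ c4] fin by blast
    also have "\<dots> \<le> card ((\<lambda>\<phi>. the (\<phi> a0)) ` A1) + card ((\<lambda>\<phi>. pre \<phi> a0) ` A2)" by (rule card_Un_le)
    also have "\<dots> \<le> card A1 + card A2" using card_image_le[OF fin(4)] card_image_le[OF fin(5)] by (rule add_mono)
    finally show ?thesis .
  qed
  have k5: "card (X - D) \<le> card B1 + card B2"
  proof -
    have "card (X - D) \<le> card ((\<lambda>\<phi>. pre \<phi> b0) ` B1 \<union> (\<lambda>\<phi>. the (\<phi> b0)) ` B2)"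
      using card_mono[OF _ c5] fin by blast
    also have "\<dots> \<le> card ((\<lambda>\<phi>. pre \<phi> b0) ` B1) + card ((\<lambda>\<phi>. the (\<phi> b0)) ` B2)" by (rule card_Un_le)
    also have "\<dots> \<le> card B1 + card B2" using card_image_le[OF fin(6)] card_image_le[OF fin(7)] by (rule add_mono)
    finally show ?thesis .
  qed
  have k6: "card (D - F) \<le> card C1 + card C2"
  proof -
    have "card (D - F) \<le> card ((\<lambda>\<phi>. pre \<phi> p0) ` C1 \<union> (\<lambda>\<phi>. the (\<phi> p0)) ` C2)"
      using card_mono[OF _ c6] fin by blast
    also have "\<dots> \<le> card ((\<lambda>\<phi>. pre \<phi> p0) ` C1) + card ((\<lambda>\<phi>. the (\<phi> p0)) ` C2)" by (rule card_Un_le)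
    also have "\<dots> \<le> card C1 + card C2" using card_image_le[OF fin(8)] card_image_le[OF fin(9)] by (rule add_mono)
    finally show ?thesis .
  qed
  have d1: "W1 \<inter> (W2 \<union> (W3 \<union> (A1 \<union> (A2 \<union> (B1 \<union> (B2 \<union> (C1 \<union> (C2 \<union> Z)))))))) = {}"
    unfolding defs using b0F a0D p0 FD by blast
  have d2: "W2 \<inter> (W3 \<union> (A1 \<union> (A2 \<union> (B1 \<union> (B2 \<union> (C1 \<union> (C2 \<union> Z))))))) = {}"
    unfolding defs using b0F a0D p0 FD by blast
  have d3: "W3 \<inter> (A1 \<union> (A2 \<union> (B1 \<union> (B2 \<union> (C1 \<union> (C2 \<union> Z)))))) = {}"
    unfolding defs using b0F a0D p0 FD by blast
  have d4: "A1 \<inter> (A2 \<union> (B1 \<union> (B2 \<union> (C1 \<union> (C2 \<union> Z))))) = {}"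
    unfolding defs using b0F a0D p0 FD by blast
  have d5: "A2 \<inter> (B1 \<union> (B2 \<union> (C1 \<union> (C2 \<union> Z)))) = {}"
    unfolding defs using b0F a0D p0 FD by blast
  have d6: "B1 \<inter> (B2 \<union> (C1 \<union> (C2 \<union> Z))) = {}"
    unfolding defs using b0F a0D p0 FD by blast
  have d7: "B2 \<inter> (C1 \<union> (C2 \<union> Z)) = {}"
    unfolding defs using b0F a0D p0 FD by blast
  have d8: "C1 \<inter> (C2 \<union> Z) = {}"
    unfolding defs using b0F a0D p0 FD by blast
  have d9: "C2 \<inter> Z = {}"
    unfolding defs using b0F a0D p0 FD by blast
  have u9: "card (C2 \<union> Z) = card C2 + card Z"
    by (rule card_Un_disjoint[OF fin(9) _ d9]) (simp add: fin)
  have u8: "card (C1 \<union> (C2 \<union> Z)) = card C1 + card (C2 \<union> Z)"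
    by (rule card_Un_disjoint[OF fin(8) _ d8]) (simp add: fin)
  have u7: "card (B2 \<union> (C1 \<union> (C2 \<union> Z))) = card B2 + card (C1 \<union> (C2 \<union> Z))"
    by (rule card_Un_disjoint[OF fin(7) _ d7]) (simp add: fin)
  have u6: "card (B1 \<union> (B2 \<union> (C1 \<union> (C2 \<union> Z)))) = card B1 + card (B2 \<union> (C1 \<union> (C2 \<union> Z)))"
    by (rule card_Un_disjoint[OF fin(6) _ d6]) (simp add: fin)
  have u5: "card (A2 \<union> (B1 \<union> (B2 \<union> (C1 \<union> (C2 \<union> Z))))) = card A2 + card (B1 \<union> (B2 \<union> (C1 \<union> (C2 \<union> Z))))"
    by (rule card_Un_disjoint[OF fin(5) _ d5]) (simp add: fin)
  have u4: "card (A1 \<union> (A2 \<union> (B1 \<union> (B2 \<union> (C1 \<union> (C2 \<union> Z)))))) = card A1 + card (A2 \<union> (B1 \<union> (B2 \<union> (C1 \<union> (C2 \<union> Z)))))"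
    by (rule card_Un_disjoint[OF fin(4) _ d4]) (simp add: fin)
  have u3: "card (W3 \<union> (A1 \<union> (A2 \<union> (B1 \<union> (B2 \<union> (C1 \<union> (C2 \<union> Z))))))) = card W3 + card (A1 \<union> (A2 \<union> (B1 \<union> (B2 \<union> (C1 \<union> (C2 \<union> Z))))))"
    by (rule card_Un_disjoint[OF fin(3) _ d3]) (simp add: fin)
  have u2: "card (W2 \<union> (W3 \<union> (A1 \<union> (A2 \<union> (B1 \<union> (B2 \<union> (C1 \<union> (C2 \<union> Z)))))))) = card W2 + card (W3 \<union> (A1 \<union> (A2 \<union> (B1 \<union> (B2 \<union> (C1 \<union> (C2 \<union> Z)))))))"
    by (rule card_Un_disjoint[OF fin(2) _ d2]) (simp add: fin)
  have u1: "card (W1 \<union> (W2 \<union> (W3 \<union> (A1 \<union> (A2 \<union> (B1 \<union> (B2 \<union> (C1 \<union> (C2 \<union> Z))))))))) = card W1 + card (W2 \<union> (W3 \<union> (A1 \<union> (A2 \<union> (B1 \<union> (B2 \<union> (C1 \<union> (C2 \<union> Z))))))))"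
    by (rule card_Un_disjoint[OF fin(1) _ d1]) (simp add: fin)
  have U: "card (W1 \<union> (W2 \<union> (W3 \<union> (A1 \<union> (A2 \<union> (B1 \<union> (B2 \<union> (C1 \<union> (C2 \<union> Z))))))))) = card W1 + card W2 + card W3 + card A1 + card A2 + card B1 + card B2 + card C1 + card C2 + card Z"
    using u1 u2 u3 u4 u5 u6 u7 u8 u9 by linarith
  have "card (W1 \<union> (W2 \<union> (W3 \<union> (A1 \<union> (A2 \<union> (B1 \<union> (B2 \<union> (C1 \<union> (C2 \<union> Z))))))))) \<le> card S"
    using sub finS by (intro card_mono) auto
  moreover have "card Z = 1" by (simp add: Z_def)
  moreover have "card X = n" by (simp add: X_def)
  moreover have "card (D - F) = card D - card F" using card_Diff_subset[OF finF FD] .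
  moreover have "card (X - D) = card X - card D" using card_Diff_subset[OF finD DX] .
  moreover have "card F \<le> card D" using card_mono[OF finD FD] .
  moreover have "card D \<le> card X" using card_mono[OF finX DX] .
  ultimately show ?thesis using U k1 k2 k3 k4 k5 k6 by linarith
qed

end

lemma idem_pow:
  assumes A: "\<forall>k\<ge>1. ppow \<phi> k \<in> A" and fin: "finite A"
  shows "\<exists>m\<ge>1. ppow \<phi> m \<cdot> ppow \<phi> m = ppow \<phi> m"
proof -
  define N where "N = card A"
  have "\<not> inj_on (ppow \<phi>) {1..N+1}"
  proof
    assume inj: "inj_on (ppow \<phi>) {1..N+1}"
    have "ppow \<phi> ` {1..N+1} \<subseteq> A" using A by auto
    then have "card {1..N+1} \<le> card A" using card_inj_on_le[OF inj _ fin] by blast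
    then show False using N_def by simp
  qed
  then obtain i0 j0 where ij0: "i0 \<in> {1..N+1}" "j0 \<in> {1..N+1}" "i0 \<noteq> j0" "ppow \<phi> i0 = ppow \<phi> j0"
    unfolding inj_on_def by blast
  obtain i j where ij: "1 \<le> i" "i < j" "ppow \<phi> i = ppow \<phi> j"
  proof (cases "i0 < j0")
    case True then show ?thesis using that[of i0 j0] ij0 by auto
  next
    case False then show ?thesis using that[of j0 i0] ij0 by auto
  qed
  define p where "p = j - i"
  have p1: "1 \<le> p" using ij p_def by simp
  have per: "ppow \<phi> (i + c + p) = ppow \<phi> (i + c)" for c
  proof -
    have "ppow \<phi> (i + c + p) = ppow \<phi> (j + c)" using ij p_def by (simp add: algebra_simps)
    also have "\<dots> = ppow \<phi> j \<cdot> ppow \<phi> c" by (rule ppow_add)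
    also have "\<dots> = ppow \<phi> i \<cdot> ppow \<phi> c" using ij by simp
    also have "\<dots> = ppow \<phi> (i + c)" by (rule ppow_add[symmetric])
    finally show ?thesis .
  qed
  have per2: "ppow \<phi> (i + c + t * p) = ppow \<phi> (i + c)" for c t
  proof (induction t)
    case 0 then show ?case by simp
  next
    case (Suc t)
    have "ppow \<phi> (i + c + Suc t * p) = ppow \<phi> (i + (c + t * p) + p)" by (simp add: algebra_simps)
    also have "\<dots> = ppow \<phi> (i + (c + t * p))" by (rule per)
    also have "\<dots> = ppow \<phi> (i + c)" using Suc by (simp add: algebra_simps)
    finally show ?case .
  qed
  define m where "m = i * p"
  have mi: "i \<le> m" using p1 m_def by simp
  have "ppow \<phi> m \<cdot> ppow \<phi> m = ppow \<phi> (m + m)" by (rule ppow_add[symmetric])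
  also have "\<dots> = ppow \<phi> (i + (m - i) + i * p)" using mi m_def by simp
  also have "\<dots> = ppow \<phi> (i + (m - i))" by (rule per2)
  also have "\<dots> = ppow \<phi> m" using mi by simp
  finally show ?thesis using mi ij(1) by (intro exI[of _ m]) auto
qed

theorem lemma3p1:
  fixes n :: nat and S :: "(nat \<rightharpoonup> nat) set" and e \<phi> :: "nat \<rightharpoonup> nat"
  assumes "n \<ge> 2"
    and "S \<subseteq> sym_inv n - sym_grp n"
    and "subsemigroup S"
    and "semitransitive n S"
    and "card S \<le> 2 * n"
    and "e \<in> S" and "e \<cdot> e = e" and "e \<noteq> Map.empty"
    and "\<phi> \<in> corner e S"
  shows "\<phi> \<in> units_of_monoid (corner e S) e \<or> nilpotent_map \<phi>"
proof -
  interpret SIS n S using assms(2-4) by unfold_locales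
  have ee: "e \<cdot> (e \<cdot> x) = e \<cdot> x" for x using assms(7) pc_assoc[of e e x] by simp
  have corner_S: "x \<in> S" if "x \<in> corner e S" for x
    using that assms(6) closed unfolding corner_def by auto
  have corner_mult: "a \<cdot> b \<in> corner e S" if "a \<in> corner e S" "b \<in> corner e S" for a b
  proof -
    obtain s t where st: "s \<in> S" "t \<in> S" "a = e \<cdot> s \<cdot> e" "b = e \<cdot> t \<cdot> e"
      using \<open>a \<in> corner e S\<close> \<open>b \<in> corner e S\<close> unfolding corner_def by blast
    have "s \<cdot> e \<cdot> t \<in> S" using st closed assms(6) by blast
    moreover have "a \<cdot> b = e \<cdot> (s \<cdot> e \<cdot> t) \<cdot> e" using st ee by simp
    ultimately show ?thesis unfolding corner_def by blast
  qed
  have pw: "ppow \<phi> (Suc k) \<in> corner e S" for k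
  proof (induction k)
    case 0 then show ?case using assms(9) by simp
  next
    case (Suc k)
    have "ppow \<phi> (Suc (Suc k)) = ppow \<phi> (Suc k) \<cdot> \<phi>" by (simp only: ppow.simps)
    then show ?case using corner_mult[OF Suc assms(9)] by simp
  qed
  have pw1: "\<forall>k\<ge>1. ppow \<phi> k \<in> sym_inv n"
  proof (intro allI impI)
    fix k :: nat assume "1 \<le> k"
    then obtain k' where "k = Suc k'" by (cases k) auto
    then show "ppow \<phi> k \<in> sym_inv n" using pw corner_S sub by blast
  qed
  obtain m where m: "1 \<le> m" "ppow \<phi> m \<cdot> ppow \<phi> m = ppow \<phi> m"
    using idem_pow[OF pw1 fin_sym_inv] by blast
  define f where "f = ppow \<phi> m"
  have fc: "f \<in> corner e S" using pw[of "m - 1"] m(1) f_def by simp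
  have fS: "f \<in> S" using corner_S[OF fc] .
  have ff: "f \<cdot> f = f" using m(2) f_def by simp
  show ?thesis
  proof (cases "f = Map.empty")
    case True
    have "ppow \<phi> m = Map.empty" using True unfolding f_def .
    then have "nilpotent_map \<phi>" unfolding nilpotent_map_def using m(1) by blast
    then show ?thesis ..
  next
    case fne: False
    show ?thesis
    proof (cases "f = e")
      case True
      define g where "g = ppow \<phi> (m + m - 1)"
      have "Suc (m + m - 2) = m + m - 1" using m(1) by simp
      then have gc: "g \<in> corner e S" using pw[of "m + m - 2"] g_def by simp
      have eq1: "Suc 0 + (m + m - 1) = m + m" "Suc (m + m - 1) = m + m" using m(1) by simp_all
      have pmm: "ppow \<phi> (m + m) = e" unfolding ppow_add f_def[symmetric] ff True[symmetric] ..
      have p1: "ppow \<phi> (Suc 0) = \<phi>" by simp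
      have "\<phi> \<cdot> g = ppow \<phi> (Suc 0) \<cdot> ppow \<phi> (m + m - 1)" using p1 g_def by simp
      also have "\<dots> = ppow \<phi> (Suc 0 + (m + m - 1))" by (rule ppow_add[symmetric])
      also have "\<dots> = e" by (simp only: eq1 pmm)
      finally have 1: "\<phi> \<cdot> g = e" .
      have "g \<cdot> \<phi> = ppow \<phi> (Suc (m + m - 1))" unfolding g_def by (simp only: ppow.simps)
      also have "\<dots> = e" by (simp only: eq1 pmm)
      finally have 2: "g \<cdot> \<phi> = e" .
      show ?thesis unfolding units_of_monoid_def using 1 2 gc assms(9) by blast
    next
      case False
      have "dom f \<subseteq> dom e"
      proof -
        obtain t where "f = e \<cdot> t \<cdot> e" using fc unfolding corner_def by blast
        then show ?thesis using dom_pc[of e "t \<cdot> e"] by simp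
      qed
      then have "2 * n + 1 \<le> card S" using count[OF assms(6,7) fS ff fne False] by blast
      then show ?thesis using assms(5) by linarith
    qed
  qed
qed

end
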